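(* Let $K\ge3$ and let $X_1,\dots,X_K\in\mathbb{R}^d$ be i.i.d. with an arbitrary common distribution having a density on $\mathbb{R}^d$ and bounded support ($\|X_i\|_2\le x_{\max}$). Fix $\beta\in\mathbb{R}^d$ and an integer $k\in\{2,\dots,K-1\}$. Then $$\mathbb{E}\big[X_kX_k^\top\mathbb{1}\{X_1^\top\beta<\dots<X_k^\top\beta<\dots<X_K^\top\beta\}\big]\preccurlyeq C_{\mathcal{X}}\,\mathbb{E}\big[(X_1X_1^\top+X_KX_K^\top)\mathbb{1}\{X_1^\top\beta<\dots<X_K^\top\beta\}\big],$$ with $C_{\mathcal{X}}=\binom{K-1}{\lceil (K-1)/2\rceil}$.
   Context: $\preccurlyeq$ denotes the Loewner (positive semidefinite) order. *)

theory Defs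
  imports "HOL-Probability.Probability"
begin

definition outer_self :: "real^'n \<Rightarrow> real^'n^'n" where
  "outer_self x = (\<chi> i j. x $ i * x $ j)"

definition loewner_le :: "real^'n^'n \<Rightarrow> real^'n^'n \<Rightarrow> bool" where
  "loewner_le A B \<longleftrightarrow> (\<forall>v. v \<bullet> (A *v v) \<le> v \<bullet> (B *v v))"

definition sorted_event :: "nat \<Rightarrow> (nat \<Rightarrow> 'w \<Rightarrow> real^'n) \<Rightarrow> real^'n \<Rightarrow> 'w set" where
  "sorted_event K X \<beta> = {\<omega>. \<forall>i\<in>{1..<K}. X i \<omega> \<bullet> \<beta> < X (Suc i) \<omega> \<bullet> \<beta>}"

end

theory Submission
  imports Defs
begin

definition Q :: "'a measure \<Rightarrow> ('a \<Rightarrow> real) \<Rightarrow> real \<Rightarrow> ennreal" where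
  "Q N u t = (\<integral>\<^sup>+w. (if t < u w then 1 else 0) \<partial>N)"

definition Phi :: "'a measure \<Rightarrow> ('a \<Rightarrow> real) \<Rightarrow> nat \<Rightarrow> real \<Rightarrow> ennreal" where
  "Phi N u n t = (\<integral>\<^sup>+z. (if t < u z then Q N u (u z) ^ n else 0) \<partial>N)"

definition sortedP :: "('a \<Rightarrow> real) \<Rightarrow> (nat \<Rightarrow> nat) \<Rightarrow> nat set \<Rightarrow> (nat \<Rightarrow> 'a) \<Rightarrow> bool" where
  "sortedP u \<pi> J x \<longleftrightarrow> (\<forall>i\<in>J. \<forall>j\<in>J. \<pi> i < \<pi> j \<longrightarrow> u (x i) < u (x j))"

definition S :: "'a measure \<Rightarrow> ('a \<Rightarrow> real) \<Rightarrow> (nat \<Rightarrow> nat) \<Rightarrow> nat set \<Rightarrow> real \<Rightarrow> ennreal" where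
  "S N u \<pi> J t = (\<integral>\<^sup>+x. (if sortedP u \<pi> J x \<and> (\<forall>j\<in>J. t < u (x j)) then 1 else 0) \<partial>PiM J (\<lambda>_. N))"

lemma pow_le_sum:
  fixes p q :: real
  assumes "0 \<le> p" "p \<le> 1" "0 \<le> q" "q \<le> 1" "a + b = n"
  shows "p ^ a * q ^ b \<le> p ^ n + q ^ n"
proof -
  define m where "m = max p q"
  have "p ^ a * q ^ b \<le> m ^ a * m ^ b"
    using assms by (intro mult_mono power_mono) (auto simp: m_def)
  also have "\<dots> = m ^ n" using assms by (simp add: power_add[symmetric])
  also have "\<dots> \<le> p ^ n + q ^ n" using assms by (auto simp: m_def max_def)
  finally show ?thesis .
qed

lemma key_real:
  fixes p q :: real
  assumes "0 \<le> p" "p \<le> 1" "0 \<le> q" "q \<le> 1" "a + b = n"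
  shows "p ^ a / fact a * (q ^ b / fact b) \<le>
     real (n choose (n div 2)) * (q ^ n / fact n + p ^ n / fact n)"
proof -
  have f0: "fact a * fact (n - a) * (n choose a) = (fact n :: nat)"
    using assms(5) by (intro binomial_fact_lemma) simp
  have nb: "n - a = b" using assms(5) by simp
  have f: "(fact n :: real) = real (n choose a) * fact a * fact b"
  proof -
    have "real (fact n) = real (fact a * fact b * (n choose a))" using f0 nb by simp
    then show ?thesis by (simp only: of_nat_fact of_nat_mult) (simp add: algebra_simps)
  qed
  have "p ^ a / fact a * (q ^ b / fact b) = real (n choose a) * (p ^ a * q ^ b) / fact n"
  proof -
    have cnz: "real (n choose a) \<noteq> 0" using assms(5) by simp
    show ?thesis by (subst f) (use cnz in \<open>simp add: field_simps\<close>)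
  qed
  also have "\<dots> \<le> real (n choose (n div 2)) * (p ^ n + q ^ n) / fact n"
    using assms by (intro divide_right_mono mult_mono pow_le_sum) (auto simp: binomial_maximum)
  also have "\<dots> = real (n choose (n div 2)) * (q ^ n / fact n + p ^ n / fact n)"
    by (simp add: field_simps)
  finally show ?thesis .
qed

context prob_space begin

lemma sortedP_meas[measurable]:
  assumes [measurable]: "u \<in> borel_measurable M" and fin: "finite J"
  shows "Measurable.pred (PiM J (\<lambda>_. M)) (sortedP u \<pi> J)"
  unfolding sortedP_def using fin by measurable

lemma S_meas[measurable]:
  assumes [measurable]: "u \<in> borel_measurable M" "g \<in> borel_measurable N" and fin: "finite J"
  shows "(\<lambda>z. S M u \<pi> J (g z)) \<in> borel_measurable N"
proof -
  interpret P: prob_space "PiM J (\<lambda>_. M)" by (intro prob_space_PiM) (simp add: prob_space_axioms)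
  show ?thesis unfolding S_def using fin by measurable
qed


lemma Q_meas[measurable]:
  assumes [measurable]: "u \<in> borel_measurable M" "g \<in> borel_measurable N"
  shows "(\<lambda>z. Q M u (g z)) \<in> borel_measurable N"
  unfolding Q_def by measurable

lemma Phi_meas[measurable]:
  assumes [measurable]: "u \<in> borel_measurable M" "g \<in> borel_measurable N"
  shows "(\<lambda>z. Phi M u n (g z)) \<in> borel_measurable N"
  unfolding Phi_def by measurable

lemma Q_le1: "Q M u t \<le> 1"
proof -
  have "Q M u t \<le> (\<integral>\<^sup>+w. 1 \<partial>M)" unfolding Q_def by (intro nn_integral_mono) auto
  then show ?thesis by (simp add: emeasure_space_1)
qed

lemma Phi_eq:
  assumes u[measurable]: "u \<in> borel_measurable M"
    and c0: "\<And>t. emeasure M {w\<in>space M. u w = t} = 0"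
  shows "of_nat (Suc n) * Phi M u n c = Q M u c ^ Suc n"
proof (induction n arbitrary: c)
  case 0
  show ?case unfolding Phi_def power_0 by (simp add: Q_def)
next
  case (Suc n)
  interpret P: pair_sigma_finite M M by unfold_locales
  define A where "A w = (\<integral>\<^sup>+z. (if c < u z \<and> u z < u w then Q M u (u z) ^ n else 0) \<partial>M)" for w
  have A_meas[measurable]: "(\<lambda>w. A w) \<in> borel_measurable M"
    unfolding A_def by measurable
  have AE_ne: "AE z in M. u z \<noteq> t" for t
    by (rule AE_I[where N="{w\<in>space M. u w = t}"]) (auto simp: c0 null_sets_def)
  have split: "(if c < u w then Phi M u n c else 0) = (if c < u w then A w + Phi M u n (u w) else 0)"
    if w: "w \<in> space M" for w
  proof (cases "c < u w")
    case True
    have "Phi M u n c = (\<integral>\<^sup>+z. (if c < u z \<and> u z < u w then Q M u (u z) ^ n else 0)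
          + (if u w < u z then Q M u (u z) ^ n else 0) \<partial>M)"
      unfolding Phi_def
    proof (rule nn_integral_cong_AE)
      show "AE z in M. (if c < u z then Q M u (u z) ^ n else 0) = (if c < u z \<and> u z < u w then Q M u (u z) ^ n else 0)
          + (if u w < u z then Q M u (u z) ^ n else 0)"
        using AE_ne[of "u w"] by eventually_elim (use True in auto)
    qed
    also have "\<dots> = A w + Phi M u n (u w)"
      unfolding A_def Phi_def by (rule nn_integral_add) auto
    finally show ?thesis using True by simp
  qed simp
  have "Q M u c * Phi M u n c = (\<integral>\<^sup>+w. (if c < u w then Phi M u n c else 0) \<partial>M)"
    unfolding Q_def by (subst nn_integral_multc[symmetric]) (auto intro!: nn_integral_cong)
  also have "\<dots> = (\<integral>\<^sup>+w. (if c < u w then A w + Phi M u n (u w) else 0) \<partial>M)"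
    by (rule nn_integral_cong) (simp add: split)
  also have "\<dots> = (\<integral>\<^sup>+w. (if c < u w then A w else 0) + (if c < u w then Phi M u n (u w) else 0) \<partial>M)"
    by (rule nn_integral_cong) simp
  also have "\<dots> = (\<integral>\<^sup>+w. (if c < u w then A w else 0) \<partial>M) + (\<integral>\<^sup>+w. (if c < u w then Phi M u n (u w) else 0) \<partial>M)"
    by (rule nn_integral_add) (auto simp: A_def)
  finally have eq1: "Q M u c * Phi M u n c = (\<integral>\<^sup>+w. (if c < u w then A w else 0) \<partial>M) + (\<integral>\<^sup>+w. (if c < u w then Phi M u n (u w) else 0) \<partial>M)" .
  have eq2: "(\<integral>\<^sup>+w. (if c < u w then A w else 0) \<partial>M) = Phi M u (Suc n) c"
  proof -
    have "(\<integral>\<^sup>+w. (if c < u w then A w else 0) \<partial>M) =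
       (\<integral>\<^sup>+w. \<integral>\<^sup>+z. (if c < u w \<and> c < u z \<and> u z < u w then Q M u (u z) ^ n else 0) \<partial>M \<partial>M)"
      unfolding A_def by (rule nn_integral_cong) (auto intro!: nn_integral_cong)
    also have "\<dots> = (\<integral>\<^sup>+z. \<integral>\<^sup>+w. (if c < u w \<and> c < u z \<and> u z < u w then Q M u (u z) ^ n else 0) \<partial>M \<partial>M)"
      by (rule P.Fubini') measurable
    also have "\<dots> = (\<integral>\<^sup>+z. (if c < u z then Q M u (u z) ^ n * Q M u (u z) else 0) \<partial>M)"
      unfolding Q_def
      by (rule nn_integral_cong) (auto simp: nn_integral_cmult[symmetric] intro!: nn_integral_cong)
    also have "\<dots> = Phi M u (Suc n) c"
      unfolding Phi_def by (rule nn_integral_cong) (simp add: mult.commute)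
    finally show ?thesis .
  qed
  have eq3: "of_nat (Suc n) * (\<integral>\<^sup>+w. (if c < u w then Phi M u n (u w) else 0) \<partial>M) = Phi M u (Suc n) c"
  proof -
    have "of_nat (Suc n) * (\<integral>\<^sup>+w. (if c < u w then Phi M u n (u w) else 0) \<partial>M)
       = (\<integral>\<^sup>+w. (if c < u w then of_nat (Suc n) * Phi M u n (u w) else 0) \<partial>M)"
      by (subst nn_integral_cmult[symmetric]) (auto intro!: nn_integral_cong)
    also have "\<dots> = Phi M u (Suc n) c"
      by (simp only: Suc.IH) (simp add: Phi_def)
    finally show ?thesis .
  qed
  have "of_nat (Suc n) * (Q M u c * Phi M u n c) = of_nat (Suc n) * Phi M u (Suc n) c + Phi M u (Suc n) c"
    unfolding eq1 eq2 distrib_left eq3 ..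
  then have "Q M u c * (of_nat (Suc n) * Phi M u n c) = of_nat (Suc (Suc n)) * Phi M u (Suc n) c"
    by (simp add: algebra_simps)
  then show ?case unfolding Suc.IH by simp
qed

lemma S_eq:
  assumes u[measurable]: "u \<in> borel_measurable M"
    and c0: "\<And>t. emeasure M {w\<in>space M. u w = t} = 0"
    and fin: "finite J" and inj: "inj_on \<pi> J"
  shows "of_nat (fact (card J)) * S M u \<pi> J c = Q M u c ^ card J"
  using fin inj
proof (induction "card J" arbitrary: J c)
  case 0
  then have "J = {}" by simp
  then show ?case by (simp add: S_def PiM_empty sortedP_def)
next
  case (Suc m)
  interpret PS: product_sigma_finite "\<lambda>_. M" by unfold_locales
  have "J \<noteq> {}" using Suc.hyps(2) by auto
  obtain j0 where j0: "j0 \<in> J" "\<pi> j0 = Min (\<pi> ` J)"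
  proof -
    have "Min (\<pi> ` J) \<in> \<pi> ` J" using Suc.prems \<open>J \<noteq> {}\<close> by (intro Min_in) auto
    then show ?thesis using that by (metis imageE)
  qed
  have j0min: "\<pi> j0 < \<pi> j" if "j \<in> J" "j \<noteq> j0" for j
  proof -
    have "\<pi> j0 \<le> \<pi> j" using j0 that Suc.prems by simp
    moreover have "\<pi> j0 \<noteq> \<pi> j" using Suc.prems(2) j0(1) that inj_on_def by metis
    ultimately show ?thesis by simp
  qed
  define J' where "J' = J - {j0}"
  have J: "J = insert j0 J'" "j0 \<notin> J'" "finite J'" using j0 Suc.prems by (auto simp: J'_def)
  have cJ': "card J' = m" using Suc.hyps(2) J by simp
  have injJ': "inj_on \<pi> J'" using Suc.prems(2) J by (simp add: inj_on_insert)
  have IH: "of_nat (fact m) * S M u \<pi> J' t = Q M u t ^ m" for t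
    using Suc.hyps(1)[of J' t] cJ' J(3) injJ' by simp
  have key: "(sortedP u \<pi> J (x(j0 := y)) \<and> (\<forall>j\<in>J. c < u ((x(j0 := y)) j))) \<longleftrightarrow>
     (c < u y \<and> (sortedP u \<pi> J' x \<and> (\<forall>j\<in>J'. u y < u (x j))))" for x y
  proof
    assume A: "sortedP u \<pi> J (x(j0 := y)) \<and> (\<forall>j\<in>J. c < u ((x(j0 := y)) j))"
    have "c < u y" using A j0(1) by force
    moreover have "sortedP u \<pi> J' x"
      using A J unfolding sortedP_def by (metis fun_upd_other insertCI)
    moreover have "\<forall>j\<in>J'. u y < u (x j)"
    proof
      fix j assume "j \<in> J'"
      then have "j \<in> J" "j \<noteq> j0" using J by auto
      with A j0min[OF this] j0(1) show "u y < u (x j)" unfolding sortedP_def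
        by (metis fun_upd_other fun_upd_same)
    qed
    ultimately show "c < u y \<and> (sortedP u \<pi> J' x \<and> (\<forall>j\<in>J'. u y < u (x j)))" by blast
  next
    assume B: "c < u y \<and> (sortedP u \<pi> J' x \<and> (\<forall>j\<in>J'. u y < u (x j)))"
    have "sortedP u \<pi> J (x(j0 := y))"
      unfolding sortedP_def
    proof (intro ballI impI)
      fix i j assume ij: "i \<in> J" "j \<in> J" "\<pi> i < \<pi> j"
      show "u ((x(j0 := y)) i) < u ((x(j0 := y)) j)"
      proof (cases "i = j0")
        case True
        then have "j \<noteq> j0" using ij by auto
        then show ?thesis using True B ij J by auto
      next
        case False
        have "j \<noteq> j0" using j0min[OF ij(1) False] ij by auto
        then show ?thesis using False B ij J unfolding sortedP_def by auto
      qed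
    qed
    moreover have "\<forall>j\<in>J. c < u ((x(j0 := y)) j)"
      using B J by auto
    ultimately show "sortedP u \<pi> J (x(j0 := y)) \<and> (\<forall>j\<in>J. c < u ((x(j0 := y)) j))" by blast
  qed
  have "S M u \<pi> J c = (\<integral>\<^sup>+y. \<integral>\<^sup>+x. (if sortedP u \<pi> J (x(j0 := y)) \<and> (\<forall>j\<in>J. c < u ((x(j0 := y)) j)) then 1 else 0) \<partial>PiM J' (\<lambda>_. M) \<partial>M)"
    unfolding S_def J(1) by (rule PS.product_nn_integral_insert_rev) (use J in auto)
  also have "\<dots> = (\<integral>\<^sup>+y. (if c < u y then S M u \<pi> J' (u y) else 0) \<partial>M)"
    unfolding key S_def by (rule nn_integral_cong) auto
  finally have "of_nat (fact (Suc m)) * S M u \<pi> J c = of_nat (Suc m) * (\<integral>\<^sup>+y. of_nat (fact m) * (if c < u y then S M u \<pi> J' (u y) else 0) \<partial>M)"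
    using J(3) by (simp add: nn_integral_cmult algebra_simps)
  also have "\<dots> = of_nat (Suc m) * Phi M u m c"
    unfolding Phi_def by (intro arg_cong2[where f="(*)"] refl nn_integral_cong) (simp add: IH[unfolded of_nat_fact])
  also have "\<dots> = Q M u c ^ Suc m" by (rule Phi_eq[OF u c0])
  finally show ?case using Suc.hyps(2) by simp
qed

end

definition chain :: "nat \<Rightarrow> ('a \<Rightarrow> real) \<Rightarrow> (nat \<Rightarrow> 'a) \<Rightarrow> bool" where
  "chain K u x \<longleftrightarrow> (\<forall>i\<in>{1..<K}. u (x i) < u (x (Suc i)))"

lemma chain_iff: "chain K u x \<longleftrightarrow> (\<forall>i\<in>{1..K}. \<forall>j\<in>{1..K}. i < j \<longrightarrow> u (x i) < u (x j))"
proof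
  assume c: "chain K u x"
  have "u (x i) < u (x j)" if "1 \<le> i" "i < j" "j \<le> K" for i j
    using that
  proof (induction j)
    case 0 then show ?case by simp
  next
    case (Suc j)
    show ?case
    proof (cases "i = j")
      case True then show ?thesis using c Suc.prems unfolding chain_def by auto
    next
      case False
      then have "u (x i) < u (x j)" using Suc by auto
      also have "u (x j) < u (x (Suc j))" using c Suc.prems False unfolding chain_def by auto
      finally show ?thesis .
    qed
  qed
  then show "\<forall>i\<in>{1..K}. \<forall>j\<in>{1..K}. i < j \<longrightarrow> u (x i) < u (x j)" by auto
next
  assume "\<forall>i\<in>{1..K}. \<forall>j\<in>{1..K}. i < j \<longrightarrow> u (x i) < u (x j)"
  then show "chain K u x" unfolding chain_def by auto
qed

lemma chain_decomp:
  assumes k: "k \<in> {1..K}"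
  shows "chain K u (x(k := y)) \<longleftrightarrow>
    ((sortedP (\<lambda>z. - u z) (\<lambda>i. K - i) {1..<k} x \<and> (\<forall>i\<in>{1..<k}. - u y < - u (x i))) \<and>
     (sortedP u id {k<..K} x \<and> (\<forall>j\<in>{k<..K}. u y < u (x j))))"
  unfolding chain_iff sortedP_def
proof safe
  assume H: "\<forall>i\<in>{1..K}. \<forall>j\<in>{1..K}. i < j \<longrightarrow> u ((x(k := y)) i) < u ((x(k := y)) j)"
  show "- u (x i) < - u (x j)" if "i \<in> {1..<k}" "j \<in> {1..<k}" "K - i < K - j" for i j
    using H[rule_format, of j i] that k by auto
  show "- u y < - u (x i)" if "i \<in> {1..<k}" for i
    using H[rule_format, of i k] that k by auto
  show "u (x i) < u (x j)" if "i \<in> {k<..K}" "j \<in> {k<..K}" "id i < id j" for i j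
    using H[rule_format, of i j] that k by auto
  show "u y < u (x j)" if "j \<in> {k<..K}" for j
    using H[rule_format, of k j] that k by auto
next
  fix i j
  assume A: "\<forall>i\<in>{1..<k}. \<forall>j\<in>{1..<k}. K - i < K - j \<longrightarrow> - u (x i) < - u (x j)"
    and B: "\<forall>i\<in>{1..<k}. - u y < - u (x i)"
    and C: "\<forall>i\<in>{k<..K}. \<forall>j\<in>{k<..K}. id i < id j \<longrightarrow> u (x i) < u (x j)"
    and D: "\<forall>j\<in>{k<..K}. u y < u (x j)"
    and ij: "i \<in> {1..K}" "j \<in> {1..K}" "i < j"
  show "u ((x(k := y)) i) < u ((x(k := y)) j)"
  proof -
    consider "j < k" | "j = k" | "i < k" "k < j" | "i = k" | "k < i" using ij by linarith
    then show ?thesis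
    proof cases
      case 1 then show ?thesis using A[rule_format, of j i] ij k by auto
    next
      case 2 then show ?thesis using B ij by auto
    next
      case 3 then show ?thesis using B[rule_format, of i] D[rule_format, of j] ij by auto
    next
      case 4 then show ?thesis using D ij by auto
    next
      case 5 then show ?thesis using C[rule_format, of i j] ij by auto
    qed
  qed
qed

context prob_space begin
lemma sortedP_meas2[measurable]:
  assumes [measurable]: "u \<in> borel_measurable M" and fin: "finite J" and sub: "J \<subseteq> I"
  shows "Measurable.pred (PiM I (\<lambda>_. M)) (sortedP u \<pi> J)"
proof -
  have "sortedP u \<pi> J x = sortedP u \<pi> J (restrict x J)" for x unfolding sortedP_def by simp
  moreover have "Measurable.pred (PiM I (\<lambda>_. M)) (\<lambda>x. sortedP u \<pi> J (restrict x J))"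
    using measurable_restrict_subset[OF sub] sortedP_meas[OF assms(1) fin] by (rule measurable_compose)
  ultimately show ?thesis by simp
qed

lemma allJ_meas[measurable]:
  fixes u :: "'a \<Rightarrow> real"
  assumes [measurable]: "u \<in> borel_measurable M" and fin: "finite J" and sub: "J \<subseteq> I"
  shows "Measurable.pred (PiM I (\<lambda>_. M)) (\<lambda>x. \<forall>j\<in>J. t < u (x j))"
proof -
  have "(\<forall>j\<in>J. t < u (x j)) = (\<forall>j\<in>J. t < u (restrict x J j))" for x by simp
  moreover have "Measurable.pred (PiM J (\<lambda>_. M)) (\<lambda>x. \<forall>j\<in>J. t < u (x j))"
    using fin by measurable
  then have "Measurable.pred (PiM I (\<lambda>_. M)) (\<lambda>x. \<forall>j\<in>J. t < u (restrict x J j))"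
    using measurable_restrict_subset[OF sub] by (rule measurable_compose[rotated])
  ultimately show ?thesis by simp
qed

lemma chain_meas[measurable]:
  fixes u :: "'a \<Rightarrow> real"
  assumes [measurable]: "u \<in> borel_measurable M"
  shows "Measurable.pred (PiM {1..K} (\<lambda>_. M)) (chain K u)"
  unfolding chain_iff by (intro pred_intros_finite) (auto intro!: pred_intros_logic measurable_compose[OF measurable_component_singleton] borel_measurable_less)

lemma main_split:
  fixes u :: "'a \<Rightarrow> real"
  assumes u[measurable]: "u \<in> borel_measurable M" and g[measurable]: "g \<in> borel_measurable M"
    and k: "k \<in> {1..K}"
  shows "(\<integral>\<^sup>+x. g (x k) * (if chain K u x then 1 else 0) \<partial>PiM {1..K} (\<lambda>_. M)) =
    (\<integral>\<^sup>+y. g y * (S M (\<lambda>z. - u z) (\<lambda>i. K - i) {1..<k} (- u y) * S M u id {k<..K} (u y)) \<partial>M)"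
proof -
  interpret PS: product_sigma_finite "\<lambda>_. M" by unfold_locales
  define L where "L = {1..<k}"
  define R where "R = {k<..K}"
  have LR: "L \<inter> R = {}" "finite L" "finite R" "k \<notin> L \<union> R" "{1..K} = insert k (L \<union> R)"
    using k by (auto simp: L_def R_def)
  have mu[measurable]: "(\<lambda>z. - u z) \<in> borel_measurable M" by measurable
  define a where "a y x = (if sortedP (\<lambda>z. - u z) (\<lambda>i. K - i) L x \<and> (\<forall>i\<in>L. - u y < - u (x i)) then 1 else 0 :: ennreal)" for y x
  define b where "b y x = (if sortedP u id R x \<and> (\<forall>j\<in>R. u y < u (x j)) then 1 else 0 :: ennreal)" for y x
  have am: "a y \<in> borel_measurable (PiM I (\<lambda>_. M))" if "L \<subseteq> I" for y I
    unfolding a_def using LR that by measurable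
  have bm: "b y \<in> borel_measurable (PiM I (\<lambda>_. M))" if "R \<subseteq> I" for y I
    unfolding b_def using LR that by measurable
  have "(\<integral>\<^sup>+x. g (x k) * (if chain K u x then 1 else 0) \<partial>PiM {1..K} (\<lambda>_. M)) =
    (\<integral>\<^sup>+y. \<integral>\<^sup>+x. g ((x(k := y)) k) * (if chain K u (x(k := y)) then 1 else 0) \<partial>PiM (L \<union> R) (\<lambda>_. M) \<partial>M)"
  proof -
    have meas: "(\<lambda>x. g (x k) * (if chain K u x then 1 else 0 :: ennreal)) \<in> borel_measurable (PiM {1..K} (\<lambda>_. M))"
      using k by measurable
    show ?thesis
      unfolding LR(5) by (rule PS.product_nn_integral_insert_rev[OF _ _ meas[unfolded LR(5)]]) (use LR in auto)
  qed
  also have "\<dots> = (\<integral>\<^sup>+y. g y * (\<integral>\<^sup>+x. a y x * b y x \<partial>PiM (L \<union> R) (\<lambda>_. M)) \<partial>M)"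
  proof (rule nn_integral_cong)
    fix y assume "y \<in> space M"
    have "(\<integral>\<^sup>+x. g ((x(k := y)) k) * (if chain K u (x(k := y)) then 1 else 0) \<partial>PiM (L \<union> R) (\<lambda>_. M))
      = (\<integral>\<^sup>+x. g y * (a y x * b y x) \<partial>PiM (L \<union> R) (\<lambda>_. M))"
      by (rule nn_integral_cong) (simp add: chain_decomp[OF k] a_def b_def L_def R_def)
    also have "\<dots> = g y * (\<integral>\<^sup>+x. a y x * b y x \<partial>PiM (L \<union> R) (\<lambda>_. M))"
      by (rule nn_integral_cmult) (use am bm in measurable)
    finally show "(\<integral>\<^sup>+x. g ((x(k := y)) k) * (if chain K u (x(k := y)) then 1 else 0) \<partial>PiM (L \<union> R) (\<lambda>_. M))
      = g y * (\<integral>\<^sup>+x. a y x * b y x \<partial>PiM (L \<union> R) (\<lambda>_. M))" .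
  qed
  also have "\<dots> = (\<integral>\<^sup>+y. g y * (S M (\<lambda>z. - u z) (\<lambda>i. K - i) L (- u y) * S M u id R (u y)) \<partial>M)"
  proof (rule nn_integral_cong)
    fix y assume "y \<in> space M"
    have "(\<integral>\<^sup>+x. a y x * b y x \<partial>PiM (L \<union> R) (\<lambda>_. M)) =
      (\<integral>\<^sup>+x. \<integral>\<^sup>+x'. a y (merge L R (x, x')) * b y (merge L R (x, x')) \<partial>PiM R (\<lambda>_. M) \<partial>PiM L (\<lambda>_. M))"
      by (rule PS.product_nn_integral_fold[OF LR(1-3)]) (use am bm in measurable)
    also have "\<dots> = (\<integral>\<^sup>+x. a y x * (\<integral>\<^sup>+x'. b y x' \<partial>PiM R (\<lambda>_. M)) \<partial>PiM L (\<lambda>_. M))"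
    proof (rule nn_integral_cong)
      fix x assume "x \<in> space (PiM L (\<lambda>_. M))"
      have "a y (merge L R (x, x')) = a y x" for x'
        unfolding a_def sortedP_def merge_def by simp
      moreover have "b y (merge L R (x, x')) = b y x'" for x'
      proof -
        have mr: "\<And>i. i \<in> R \<Longrightarrow> merge L R (x, x') i = x' i" using LR(1) by (auto simp: merge_def)
        show ?thesis unfolding b_def sortedP_def by (auto simp: mr)
      qed
      ultimately show "(\<integral>\<^sup>+x'. a y (merge L R (x, x')) * b y (merge L R (x, x')) \<partial>PiM R (\<lambda>_. M)) =
         a y x * (\<integral>\<^sup>+x'. b y x' \<partial>PiM R (\<lambda>_. M))"
        by (simp add: nn_integral_cmult bm)
    qed
    also have "\<dots> = (\<integral>\<^sup>+x. a y x \<partial>PiM L (\<lambda>_. M)) * (\<integral>\<^sup>+x'. b y x' \<partial>PiM R (\<lambda>_. M))"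
      by (rule nn_integral_multc) (use am in measurable)
    also have "\<dots> = S M (\<lambda>z. - u z) (\<lambda>i. K - i) L (- u y) * S M u id R (u y)"
      unfolding S_def a_def b_def ..
    finally show "g y * (\<integral>\<^sup>+x. a y x * b y x \<partial>PiM (L \<union> R) (\<lambda>_. M)) =
       g y * (S M (\<lambda>z. - u z) (\<lambda>i. K - i) L (- u y) * S M u id R (u y))" by simp
  qed
  finally show ?thesis unfolding L_def R_def .
qed

end

context prob_space begin
lemma S_le1:
  assumes "finite J"
  shows "S M u \<pi> J c \<le> 1"
proof -
  interpret P: prob_space "PiM J (\<lambda>_. M)" by (intro prob_space_PiM) (simp add: prob_space_axioms)
  have "S M u \<pi> J c \<le> (\<integral>\<^sup>+x. 1 \<partial>PiM J (\<lambda>_. M))" unfolding S_def by (intro nn_integral_mono) auto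
  then show ?thesis by (simp add: P.emeasure_space_1)
qed

lemma S_real:
  fixes u :: "'a \<Rightarrow> real"
  assumes u[measurable]: "u \<in> borel_measurable M"
    and c0: "\<And>t. emeasure M {w\<in>space M. u w = t} = 0"
    and fin: "finite J" and inj: "inj_on \<pi> J"
  shows "S M u \<pi> J c = ennreal (enn2real (Q M u c) ^ card J / fact (card J))"
proof -
  define s where "s = enn2real (S M u \<pi> J c)"
  define q where "q = enn2real (Q M u c)"
  have Sne: "S M u \<pi> J c \<noteq> \<top>" using S_le1[OF fin, of u \<pi> c]
    by (metis ennreal_one_neq_top top_unique)
  have Qne: "Q M u c \<noteq> \<top>" using Q_le1[of u c]
    by (metis ennreal_one_neq_top top_unique)
  have S: "S M u \<pi> J c = ennreal s" unfolding s_def using Sne by (simp add: ennreal_enn2real_if)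
  have Q: "Q M u c = ennreal q" unfolding q_def using Qne by (simp add: ennreal_enn2real_if)
  have s0: "0 \<le> s" "0 \<le> q" by (auto simp: s_def q_def)
  have "ennreal (fact (card J) * s) = ennreal (q ^ card J)"
  proof -
    have ff: "(of_nat (fact (card J)) :: ennreal) = ennreal (fact (card J))"
      by (metis of_nat_fact ennreal_of_nat_eq_real_of_nat)
    show ?thesis
      using S_eq[OF u c0 fin inj, of c] unfolding S Q ff
      by (simp add: ennreal_mult' ennreal_power s0)
  qed
  then have "fact (card J) * s = q ^ card J" using s0 by (simp add: ennreal_inj)
  then have "s = q ^ card J / fact (card J)" by (simp add: field_simps)
  then show ?thesis unfolding S q_def by simp
qed

lemma abstract_ineq:
  fixes u :: "'a \<Rightarrow> real"
  assumes u[measurable]: "u \<in> borel_measurable M"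
    and c0: "\<And>t. emeasure M {w\<in>space M. u w = t} = 0"
    and g[measurable]: "g \<in> borel_measurable M"
    and K: "2 \<le> K" and k: "k \<in> {1..K}"
  shows "(\<integral>\<^sup>+x. g (x k) * (if chain K u x then 1 else 0) \<partial>PiM {1..K} (\<lambda>_. M)) \<le>
    of_nat ((K - 1) choose ((K - 1) div 2)) *
    ((\<integral>\<^sup>+x. g (x 1) * (if chain K u x then 1 else 0) \<partial>PiM {1..K} (\<lambda>_. M)) +
     (\<integral>\<^sup>+x. g (x K) * (if chain K u x then 1 else 0) \<partial>PiM {1..K} (\<lambda>_. M)))"
proof -
  define n where "n = K - 1"
  define C where "C = n choose (n div 2)"
  have mu[measurable]: "(\<lambda>z. - u z) \<in> borel_measurable M" by measurable
  have c0': "emeasure M {w\<in>space M. - u w = t} = 0" for t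
  proof -
    have "{w\<in>space M. - u w = t} = {w\<in>space M. u w = - t}" by auto
    then show ?thesis using c0[of "- t"] by simp
  qed
  define P where "P y = enn2real (Q M (\<lambda>z. - u z) (- u y))" for y
  define R where "R y = enn2real (Q M u (u y))" for y
  have Pm[measurable]: "P \<in> borel_measurable M" unfolding P_def[abs_def] by measurable
  have Rm[measurable]: "R \<in> borel_measurable M" unfolding R_def[abs_def] by measurable
  have P01: "0 \<le> P y" "P y \<le> 1" for y
    unfolding P_def using Q_le1[of "\<lambda>z. - u z" "- u y"] by (auto simp: enn2real_leI)
  have R01: "0 \<le> R y" "P y \<le> 1" "R y \<le> 1" for y
    unfolding R_def using Q_le1[of u "u y"] P01 by (auto simp: enn2real_leI)
  have injm: "inj_on (\<lambda>i. K - i) {1..<j}" if "j \<le> K" for j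
    using that by (auto simp: inj_on_def)
  have SL: "S M (\<lambda>z. - u z) (\<lambda>i. K - i) {1..<j} (- u y) = ennreal (P y ^ (j - 1) / fact (j - 1))"
    if "j \<le> K" for j y
    using S_real[OF mu c0' _ injm[OF that]] by (simp add: P_def)
  have SR: "S M u id {j<..K} (u y) = ennreal (R y ^ (K - j) / fact (K - j))" for j y
    using S_real[OF u c0, of "{j<..K}" id] by (simp add: R_def)
  have split: "(\<integral>\<^sup>+x. g (x j) * (if chain K u x then 1 else 0) \<partial>PiM {1..K} (\<lambda>_. M)) =
     (\<integral>\<^sup>+y. g y * ennreal (P y ^ (j - 1) / fact (j - 1) * (R y ^ (K - j) / fact (K - j))) \<partial>M)"
    if "j \<in> {1..K}" for j
    unfolding main_split[OF u g that]
  proof (intro nn_integral_cong)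
    fix y
    have jK: "j \<le> K" using that by auto
    show "g y * (S M (\<lambda>z. - u z) (\<lambda>i. K - i) {1..<j} (- u y) * S M u id {j<..K} (u y)) =
      g y * ennreal (P y ^ (j - 1) / fact (j - 1) * (R y ^ (K - j) / fact (K - j)))"
    proof -
      have a1: "0 \<le> P y ^ (j - 1) / fact (j - 1)" "0 \<le> R y ^ (K - j) / fact (K - j)"
        using P01[of y] R01[of y] by auto
      show ?thesis unfolding SL[OF jK] SR ennreal_mult[OF a1] ..
    qed
  qed
  have "(\<integral>\<^sup>+x. g (x k) * (if chain K u x then 1 else 0) \<partial>PiM {1..K} (\<lambda>_. M)) \<le>
     (\<integral>\<^sup>+y. of_nat C * (g y * ennreal (R y ^ n / fact n) + g y * ennreal (P y ^ n / fact n)) \<partial>M)"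
    unfolding split[OF k]
  proof (intro nn_integral_mono)
    fix y assume "y \<in> space M"
    have "P y ^ (k - 1) / fact (k - 1) * (R y ^ (K - k) / fact (K - k)) \<le>
      real C * (R y ^ n / fact n + P y ^ n / fact n)"
      unfolding C_def using P01[of y] R01[of y] k by (intro key_real) (auto simp: n_def)
    then have "ennreal (P y ^ (k - 1) / fact (k - 1) * (R y ^ (K - k) / fact (K - k))) \<le>
      ennreal (real C * (R y ^ n / fact n + P y ^ n / fact n))"
      by (rule ennreal_leI)
    also have "\<dots> = of_nat C * (ennreal (R y ^ n / fact n) + ennreal (P y ^ n / fact n))"
      using P01[of y] R01[of y] by (simp add: ennreal_mult ennreal_plus ennreal_of_nat_eq_real_of_nat)
    finally have X: "ennreal (P y ^ (k - 1) / fact (k - 1) * (R y ^ (K - k) / fact (K - k))) \<le>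
      of_nat C * (ennreal (R y ^ n / fact n) + ennreal (P y ^ n / fact n))" .
    have "of_nat C * (g y * ennreal (R y ^ n / fact n) + g y * ennreal (P y ^ n / fact n)) =
      g y * (of_nat C * (ennreal (R y ^ n / fact n) + ennreal (P y ^ n / fact n)))"
      by (simp add: algebra_simps)
    then show "g y * ennreal (P y ^ (k - 1) / fact (k - 1) * (R y ^ (K - k) / fact (K - k))) \<le>
      of_nat C * (g y * ennreal (R y ^ n / fact n) + g y * ennreal (P y ^ n / fact n))"
      using X by (simp add: mult_left_mono)
  qed
  also have "\<dots> = of_nat C * ((\<integral>\<^sup>+y. g y * ennreal (R y ^ n / fact n) \<partial>M) + (\<integral>\<^sup>+y. g y * ennreal (P y ^ n / fact n) \<partial>M))"
  proof -
    have "(\<integral>\<^sup>+y. of_nat C * (g y * ennreal (R y ^ n / fact n) + g y * ennreal (P y ^ n / fact n)) \<partial>M)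
      = of_nat C * (\<integral>\<^sup>+y. g y * ennreal (R y ^ n / fact n) + g y * ennreal (P y ^ n / fact n) \<partial>M)"
      by (rule nn_integral_cmult) measurable
    also have "(\<integral>\<^sup>+y. g y * ennreal (R y ^ n / fact n) + g y * ennreal (P y ^ n / fact n) \<partial>M) =
      (\<integral>\<^sup>+y. g y * ennreal (R y ^ n / fact n) \<partial>M) + (\<integral>\<^sup>+y. g y * ennreal (P y ^ n / fact n) \<partial>M)"
      by (rule nn_integral_add) measurable
    finally show ?thesis .
  qed
  also have "(\<integral>\<^sup>+y. g y * ennreal (R y ^ n / fact n) \<partial>M) = (\<integral>\<^sup>+x. g (x 1) * (if chain K u x then 1 else 0) \<partial>PiM {1..K} (\<lambda>_. M))"
    using K by (subst split) (auto simp: n_def)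
  also have "(\<integral>\<^sup>+y. g y * ennreal (P y ^ n / fact n) \<partial>M) = (\<integral>\<^sup>+x. g (x K) * (if chain K u x then 1 else 0) \<partial>PiM {1..K} (\<lambda>_. M))"
    using K by (subst split) (auto simp: n_def)
  finally show ?thesis unfolding C_def n_def .
qed

end

lemma outer_mult: "outer_self x *v v = (x \<bullet> v) *\<^sub>R x"
  unfolding outer_self_def
  by (simp add: vec_eq_iff matrix_vector_mult_def inner_vec_def sum_distrib_left algebra_simps)

lemma quad: "v \<bullet> ((c *\<^sub>R outer_self x) *v v) = c * (v \<bullet> x)\<^sup>2"
  by (simp add: scaleR_matrix_vector_assoc[symmetric] outer_mult inner_commute power2_eq_square)

lemma quad2: "v \<bullet> ((c *\<^sub>R (outer_self x + outer_self y)) *v v) = c * ((v \<bullet> x)\<^sup>2 + (v \<bullet> y)\<^sup>2)"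
  by (simp add: scaleR_matrix_vector_assoc[symmetric] matrix_vector_mult_add_rdistrib outer_mult
      inner_add_right inner_commute power2_eq_square algebra_simps)

lemma blin: "bounded_linear (\<lambda>A::real^'n^'n. v \<bullet> (A *v v))"
proof -
  have "linear (\<lambda>A::real^'n^'n. v \<bullet> (A *v v))"
    by (rule linearI) (simp_all add: matrix_vector_mult_add_rdistrib inner_add_right
        scaleR_matrix_vector_assoc[symmetric])
  then show ?thesis by (simp add: linear_conv_bounded_linear)
qed

lemma norm_outer: "norm (outer_self (x::real^'n)) \<le> real CARD('n) * (norm x)\<^sup>2"
proof -
  have row: "outer_self x $ i = x $ i *\<^sub>R x" for i
    unfolding outer_self_def by (simp add: vec_eq_iff)
  have "norm (outer_self x) = L2_set (\<lambda>i. norm (outer_self x $ i)) UNIV"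
    by (simp add: norm_vec_def)
  also have "\<dots> \<le> (\<Sum>i\<in>UNIV. norm (outer_self x $ i))"
    by (rule L2_set_le_sum) simp
  also have "\<dots> \<le> (\<Sum>i\<in>(UNIV::'n set). (norm x)\<^sup>2)"
  proof (rule sum_mono)
    fix i
    have "norm (outer_self x $ i) = \<bar>x $ i\<bar> * norm x" by (simp add: row)
    also have "\<dots> \<le> norm x * norm x" by (intro mult_right_mono component_le_norm_cart) simp
    finally show "norm (outer_self x $ i) \<le> (norm x)\<^sup>2" by (simp add: power2_eq_square)
  qed
  also have "\<dots> = real CARD('n) * (norm x)\<^sup>2" by simp
  finally show ?thesis .
qed

lemma outer_cont: "continuous_on UNIV (outer_self :: real^'n \<Rightarrow> real^'n^'n)"
  unfolding outer_self_def by (intro continuous_intros)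

lemma outer_meas[measurable]: "outer_self \<in> borel_measurable (borel :: (real^'n) measure)"
  by (rule borel_measurable_continuous_onI[OF outer_cont])

lemma ceil_half: "nat \<lceil>real n / 2\<rceil> = n - n div 2"
proof (cases "even n")
  case True
  then obtain m where "n = 2 * m" by (elim evenE)
  then show ?thesis by simp
next
  case False
  then obtain m where n: "n = 2 * m + 1" by (elim oddE)
  have "\<lceil>real n / 2\<rceil> = int m + 1"
    unfolding n by (simp add: ceiling_eq_iff)
  then show ?thesis using n by simp
qed

theorem lemma13:
  fixes M :: "'w measure" and X :: "nat \<Rightarrow> 'w \<Rightarrow> real^'d"
    and f :: "real^'d \<Rightarrow> ennreal" and \<beta> :: "real^'d"
    and K k :: nat and xmax :: real
  assumes "prob_space M"
    and "K \<ge> 3"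
    and "\<And>i. i \<in> {1..K} \<Longrightarrow> X i \<in> borel_measurable M"
    and "prob_space.indep_vars M (\<lambda>_. borel) X {1..K}"
    and "f \<in> borel_measurable borel"
    and "\<And>i. i \<in> {1..K} \<Longrightarrow> distr M borel (X i) = density lborel f"
    and "\<And>i. i \<in> {1..K} \<Longrightarrow> (AE \<omega> in M. norm (X i \<omega>) \<le> xmax)"
    and "2 \<le> k" and "k \<le> K - 1"
  shows "loewner_le
     (\<integral>\<omega>. indicator (sorted_event K X \<beta>) \<omega> *\<^sub>R outer_self (X k \<omega>) \<partial>M)
     (real (K - 1 choose nat \<lceil>real (K - 1) / 2\<rceil>) *\<^sub>R
       (\<integral>\<omega>. indicator (sorted_event K X \<beta>) \<omega> *\<^sub>R
              (outer_self (X 1 \<omega>) + outer_self (X K \<omega>)) \<partial>M))"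
proof (cases "\<beta> = 0")
  case True
  have "sorted_event K X \<beta> = {}"
    using assms(2) True unfolding sorted_event_def by force
  then show ?thesis unfolding loewner_le_def by simp
next
  case False
  note bne = False
  interpret P: prob_space M by fact
  define I where "I = {1..K}"
  define \<mu> where "\<mu> = density lborel f"
  define Y where "Y \<omega> = (\<lambda>i\<in>I. X i \<omega>)" for \<omega>
  define Sev where "Sev = sorted_event K X \<beta>"
  define u where "u y = y \<bullet> \<beta>" for y :: "real^'d"
  define n where "n = K - 1"
  define C where "C = n choose (n div 2)"
  have K2: "2 \<le> K" using assms(2) by simp
  have kI: "k \<in> I" "1 \<in> I" "K \<in> I" using assms(2,8,9) by (auto simp: I_def)
  have Xm[measurable]: "X i \<in> borel_measurable M" if "i \<in> I" for i using assms(3) that by (simp add: I_def)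
  have sets_mu: "sets \<mu> = sets borel" by (simp add: \<mu>_def)
  have space_mu: "space \<mu> = UNIV" by (simp add: \<mu>_def)
  have Xmu: "X i \<in> M \<rightarrow>\<^sub>M \<mu>" if "i \<in> I" for i
    using Xm[OF that] by (simp add: measurable_cong_sets[OF refl sets_mu])
  have distr_mu: "distr M borel (X i) = \<mu>" if "i \<in> I" for i
    using assms(6) that by (simp add: I_def \<mu>_def)
  have prob_mu: "prob_space \<mu>"
    using P.prob_space_distr[OF Xm[OF kI(2)]] distr_mu[OF kI(2)] by simp
  interpret PM: prob_space \<mu> by (rule prob_mu)
  have Ym: "Y \<in> M \<rightarrow>\<^sub>M PiM I (\<lambda>_. \<mu>)"
    unfolding Y_def by (rule measurable_restrict) (rule Xmu)
  have distr_eq: "distr M (PiM I (\<lambda>_. \<mu>)) Y = PiM I (\<lambda>_. \<mu>)"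
  proof -
    have "distr M (PiM I (\<lambda>_. borel)) (\<lambda>x. \<lambda>i\<in>I. X i x) = PiM I (\<lambda>i. distr M borel (X i))"
      using assms(4) by (subst P.indep_vars_iff_distr_eq_PiM'[symmetric]) (use kI Xm in \<open>auto simp: I_def\<close>)
    also have "\<dots> = PiM I (\<lambda>_. \<mu>)" by (rule PiM_cong) (simp_all add: distr_mu)
    also have "distr M (PiM I (\<lambda>_. borel)) (\<lambda>x. \<lambda>i\<in>I. X i x) = distr M (PiM I (\<lambda>_. \<mu>)) Y"
      by (rule distr_cong) (simp_all add: Y_def sets_mu cong: sets_PiM_cong)
    finally show ?thesis .
  qed
  have chainY: "chain K u (Y \<omega>) \<longleftrightarrow> \<omega> \<in> Sev" for \<omega>
    unfolding chain_def Sev_def sorted_event_def Y_def u_def I_def by auto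
  have um[measurable]: "u \<in> borel_measurable \<mu>"
    unfolding u_def measurable_cong_sets[OF sets_mu refl] by measurable
  have c0: "emeasure \<mu> {w\<in>space \<mu>. u w = t} = 0" for t
  proof -
    have neg: "negligible {w. \<beta> \<bullet> w = t}" using bne by (intro negligible_hyperplane) simp
    have eq: "{w\<in>space \<mu>. u w = t} = {w. \<beta> \<bullet> w = t}" by (auto simp: space_mu u_def inner_commute)
    have sb: "{w. \<beta> \<bullet> w = t} \<in> sets lborel" by measurable
    have nl: "{w. \<beta> \<bullet> w = t} \<in> null_sets lborel"
      using neg sb by (simp add: negligible_iff_null_sets null_sets_completion_iff)
    have ae: "AE x in lborel. x \<in> {w. \<beta> \<bullet> w = t} \<longrightarrow> f x = 0"
      using AE_not_in[OF nl] by eventually_elim auto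
    have "{w. \<beta> \<bullet> w = t} \<in> null_sets \<mu>"
      unfolding \<mu>_def using assms(5) sb ae by (subst null_sets_density_iff) auto
    then show ?thesis unfolding eq by (simp add: null_sets_def)
  qed
  have predS[measurable]: "Measurable.pred M (\<lambda>\<omega>. \<omega> \<in> Sev)"
  proof -
    have "Measurable.pred M (\<lambda>\<omega>. chain K u (Y \<omega>))"
      using measurable_compose[OF Ym PM.chain_meas[OF um, of K, folded I_def]] by simp
    then show ?thesis by (simp add: chainY)
  qed
  show ?thesis
    unfolding loewner_le_def
  proof
    fix v :: "real^'d"
    define h where "h j \<omega> = indicator Sev \<omega> * (v \<bullet> X j \<omega>)\<^sup>2" for j \<omega>
    define g where "g y = ennreal ((v \<bullet> y)\<^sup>2)" for y :: "real^'d"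
    have gm[measurable]: "g \<in> borel_measurable \<mu>"
      unfolding g_def[abs_def] measurable_cong_sets[OF sets_mu refl] by measurable
    have hm[measurable]: "h j \<in> borel_measurable M" if "j \<in> I" for j
      using that unfolding h_def[abs_def] by measurable
    have h0: "0 \<le> h j \<omega>" for j \<omega> by (simp add: h_def)
    define B where "B = (norm v * xmax)\<^sup>2"
    have hB: "AE \<omega> in M. norm (h j \<omega>) \<le> B" if "j \<in> I" for j
    proof -
      have "AE \<omega> in M. norm (X j \<omega>) \<le> xmax" using assms(7) that by (simp add: I_def)
      then show ?thesis
    proof (eventually_elim)
      case (elim \<omega>)
      have "h j \<omega> \<le> (v \<bullet> X j \<omega>)\<^sup>2" by (simp add: h_def indicator_def)
      also have "\<dots> = \<bar>v \<bullet> X j \<omega>\<bar>\<^sup>2" by simp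
      also have "\<dots> \<le> (norm v * xmax)\<^sup>2"
      proof (rule power_mono)
        have "\<bar>v \<bullet> X j \<omega>\<bar> \<le> norm v * norm (X j \<omega>)" by (rule Cauchy_Schwarz_ineq2)
        also have "\<dots> \<le> norm v * xmax" using elim by (intro mult_left_mono) auto
        finally show "\<bar>v \<bullet> X j \<omega>\<bar> \<le> norm v * xmax" .
      qed simp
      finally show ?case using h0[of j \<omega>] by (simp add: B_def)
    qed
    qed
    have hint: "integrable M (h j)" if "j \<in> I" for j
      by (rule P.integrable_const_bound[OF hB[OF that] hm[OF that]])
    define N where "N j = (\<integral>\<^sup>+\<omega>. ennreal (h j \<omega>) \<partial>M)" for j
    have Nfin: "N j < \<top>" if "j \<in> I" for j
      using integrableD(2)[OF hint[OF that]] h0 by (simp add: N_def top.not_eq_extremum)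
    have Nreal: "(\<integral>\<omega>. h j \<omega> \<partial>M) = enn2real (N j)" if "j \<in> I" for j
      unfolding N_def by (rule integral_eq_nn_integral) (use that h0 in auto)
    have Ntr: "N j = (\<integral>\<^sup>+x. g (x j) * (if chain K u x then 1 else 0) \<partial>PiM {1..K} (\<lambda>_. \<mu>))"
      if "j \<in> I" for j
    proof -
      have "(\<integral>\<^sup>+x. g (x j) * (if chain K u x then 1 else 0) \<partial>PiM I (\<lambda>_. \<mu>)) =
         (\<integral>\<^sup>+x. g (x j) * (if chain K u x then 1 else 0) \<partial>distr M (PiM I (\<lambda>_. \<mu>)) Y)"
        by (simp add: distr_eq)
      also have "\<dots> = (\<integral>\<^sup>+\<omega>. g (Y \<omega> j) * (if chain K u (Y \<omega>) then 1 else 0) \<partial>M)"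
      proof (rule nn_integral_distr[OF Ym])
        have "(\<lambda>x. g (x j) * (if chain K u x then 1 else 0)) \<in> borel_measurable (PiM {1..K} (\<lambda>_. \<mu>))"
          using that unfolding I_def by measurable
        then show "(\<lambda>x. g (x j) * (if chain K u x then 1 else 0)) \<in> borel_measurable (distr M (PiM I (\<lambda>_. \<mu>)) Y)"
          unfolding measurable_cong_sets[OF sets_distr refl] I_def .
      qed
      also have "\<dots> = N j"
        unfolding N_def
      proof (rule nn_integral_cong)
        fix \<omega>
        have Yj: "Y \<omega> j = X j \<omega>" using that by (simp add: Y_def)
        show "g (Y \<omega> j) * (if chain K u (Y \<omega>) then 1 else 0) = ennreal (h j \<omega>)"
          by (simp add: chainY Yj g_def h_def indicator_def)
      qed
      finally show ?thesis unfolding I_def by simp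
    qed
    have ineqN: "N k \<le> of_nat C * (N 1 + N K)"
      unfolding Ntr[OF kI(1)] Ntr[OF kI(2)] Ntr[OF kI(3)] C_def n_def
      by (rule PM.abstract_ineq[OF um c0 gm K2]) (use kI in \<open>simp add: I_def\<close>)
    have ineqR: "(\<integral>\<omega>. h k \<omega> \<partial>M) \<le> real C * ((\<integral>\<omega>. h 1 \<omega> \<partial>M) + (\<integral>\<omega>. h K \<omega> \<partial>M))"
    proof -
      have fin: "of_nat C * (N 1 + N K) < \<top>"
        using Nfin[OF kI(2)] Nfin[OF kI(3)] by (simp add: ennreal_mult_less_top of_nat_less_top)
      have "enn2real (N k) \<le> enn2real (of_nat C * (N 1 + N K))"
        by (rule enn2real_mono[OF ineqN fin])
      also have "\<dots> = real C * (enn2real (N 1) + enn2real (N K))"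
        using Nfin[OF kI(2)] Nfin[OF kI(3)] by (simp add: enn2real_mult enn2real_plus)
      finally show ?thesis using kI by (simp add: Nreal)
    qed
    define F where "F \<omega> = indicator Sev \<omega> *\<^sub>R outer_self (X k \<omega>)" for \<omega>
    define G where "G \<omega> = indicator Sev \<omega> *\<^sub>R (outer_self (X 1 \<omega>) + outer_self (X K \<omega>))" for \<omega>
    define D where "D = real CARD('d) * xmax\<^sup>2"
    have normO: "AE \<omega> in M. norm (outer_self (X j \<omega>)) \<le> D" if "j \<in> I" for j
    proof -
      have "AE \<omega> in M. norm (X j \<omega>) \<le> xmax" using assms(7) that by (simp add: I_def)
      then show ?thesis
    proof (eventually_elim)
      case (elim \<omega>)
      have "norm (outer_self (X j \<omega>)) \<le> real CARD('d) * (norm (X j \<omega>))\<^sup>2" by (rule norm_outer)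
      also have "\<dots> \<le> real CARD('d) * xmax\<^sup>2"
        using elim by (intro mult_left_mono power_mono) auto
      finally show ?case by (simp add: D_def)
    qed
    qed
    have Fint: "integrable M F"
    proof (rule P.integrable_const_bound[where B=D])
      show "AE \<omega> in M. norm (F \<omega>) \<le> D"
        using normO[OF kI(1)] by eventually_elim (auto simp: F_def indicator_def D_def)
      show "F \<in> borel_measurable M" unfolding F_def[abs_def] using kI by measurable
    qed
    have Gint: "integrable M G"
    proof (rule P.integrable_const_bound[where B="D + D"])
      show "AE \<omega> in M. norm (G \<omega>) \<le> D + D"
        using normO[OF kI(2)] normO[OF kI(3)]
      proof eventually_elim
        case (elim \<omega>)
        have "norm (G \<omega>) \<le> norm (outer_self (X 1 \<omega>) + outer_self (X K \<omega>))"
          by (simp add: G_def indicator_def)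
        also have "\<dots> \<le> D + D" using elim by (intro order.trans[OF norm_triangle_ineq] add_mono)
        finally show ?case .
      qed
      show "G \<in> borel_measurable M" unfolding G_def[abs_def] using kI by measurable
    qed
    have L: "v \<bullet> (integral\<^sup>L M F *v v) = (\<integral>\<omega>. h k \<omega> \<partial>M)"
    proof -
      have "v \<bullet> (integral\<^sup>L M F *v v) = (\<integral>\<omega>. v \<bullet> (F \<omega> *v v) \<partial>M)"
        by (rule integral_bounded_linear[OF blin Fint, symmetric])
      also have "\<dots> = (\<integral>\<omega>. h k \<omega> \<partial>M)"
        by (rule Bochner_Integration.integral_cong) (simp_all add: F_def h_def quad)
      finally show ?thesis .
    qed
    have R: "v \<bullet> (integral\<^sup>L M G *v v) = (\<integral>\<omega>. h 1 \<omega> \<partial>M) + (\<integral>\<omega>. h K \<omega> \<partial>M)"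
    proof -
      have "v \<bullet> (integral\<^sup>L M G *v v) = (\<integral>\<omega>. v \<bullet> (G \<omega> *v v) \<partial>M)"
        by (rule integral_bounded_linear[OF blin Gint, symmetric])
      also have "\<dots> = (\<integral>\<omega>. h 1 \<omega> + h K \<omega> \<partial>M)"
        by (rule Bochner_Integration.integral_cong) (simp_all only: G_def h_def quad2 distrib_left)
      also have "\<dots> = (\<integral>\<omega>. h 1 \<omega> \<partial>M) + (\<integral>\<omega>. h K \<omega> \<partial>M)"
        by (rule Bochner_Integration.integral_add) (use hint kI in auto)
      finally show ?thesis .
    qed
    have Ceq: "real (K - 1 choose nat \<lceil>real (K - 1) / 2\<rceil>) = real C"
    proof -
      have "nat \<lceil>real (K - 1) / 2\<rceil> = n - n div 2" using ceil_half[of n] by (simp add: n_def)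
      then show ?thesis unfolding C_def n_def
        by (metis binomial_symmetric div_le_dividend)
    qed
    show "v \<bullet> (integral\<^sup>L M (\<lambda>\<omega>. indicator (sorted_event K X \<beta>) \<omega> *\<^sub>R outer_self (X k \<omega>)) *v v)
      \<le> v \<bullet> ((real (K - 1 choose nat \<lceil>real (K - 1) / 2\<rceil>) *\<^sub>R
             integral\<^sup>L M (\<lambda>\<omega>. indicator (sorted_event K X \<beta>) \<omega> *\<^sub>R (outer_self (X 1 \<omega>) + outer_self (X K \<omega>)))) *v v)"
      using L R ineqR unfolding Ceq F_def[abs_def] G_def[abs_def] Sev_def
      by (simp add: scaleR_matrix_vector_assoc[symmetric])
  qed
qed

end
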